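(* Let $X,Y$ be totally ordered alphabets. The linear map $\Phi_\bullet(X,Y):\mathbf{H}_\mathrm{Pack}\to\mathbf{A}_{X,Y}$, $M\mapsto\Phi_M(X,Y)$, is injective if and only if both $X$ and $Y$ are infinite.
   Context: A totally ordered alphabet is a finite or countable set with a total order. For totally ordered alphabets $X,Y$, $\mathbf{A}_{X,Y}=\mathbb{Q}[[t_{i,j}\mid i\in X,\ j\in Y]]$ (commuting indeterminates). A packed matrix is a matrix with entries in $\mathbb{N}$ with no zero row and no zero column (the empty matrix $1$ is packed); $\mathrm{Pack}$ is their set and $\mathbf{H}_\mathrm{Pack}$ the $\mathbb{Q}$-vector space with basis $\mathrm{Pack}$. For $M=(m_{r,s})\in\mathrm{Pack}$ with $k$ rows and $l$ columns, $\Phi_M(X,Y)=\sum_{i_1<\dots<i_k\in X,\ j_1<\dots<j_l\in Y}\prod_{r=1}^k\prod_{s=1}^l t_{i_r,j_s}^{m_{r,s}}$ ($\Phi_1=1$), extended linearly. *)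

theory Defs
  imports "Jordan_Normal_Form.Matrix" "HOL-Library.FuncSet" "HOL-Library.Countable_Set"
begin

definition packed :: "nat mat \<Rightarrow> bool" where
  "packed M \<longleftrightarrow>
     (\<forall>r<dim_row M. \<exists>s<dim_col M. M $$ (r,s) \<noteq> 0) \<and>
     (\<forall>s<dim_col M. \<exists>r<dim_row M. M $$ (r,s) \<noteq> 0)"

text \<open>A monomial in the commuting indeterminates t_{i,j} is an exponent function
  on pairs (i,j); an element of Q[[t_{i,j}]] is represented by its coefficient function
  on monomials.\<close>
type_synonym ('a,'b) monom = "'a \<times> 'b \<Rightarrow> nat"
type_synonym ('a,'b) series = "('a,'b) monom \<Rightarrow> rat"

text \<open>The monomial prod_{r,s} t_{f r, g s}^{M r s}.\<close>
definition monom_of :: "nat mat \<Rightarrow> (nat \<Rightarrow> 'a) \<Rightarrow> (nat \<Rightarrow> 'b) \<Rightarrow> ('a,'b) monom" where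
  "monom_of M f g = (\<lambda>(a,b). \<Sum>r<dim_row M. \<Sum>s<dim_col M.
       if f r = a \<and> g s = b then M $$ (r,s) else 0)"

definition Phi :: "'a::linorder set \<Rightarrow> 'b::linorder set \<Rightarrow> nat mat \<Rightarrow> ('a,'b) series" where
  "Phi X Y M = (\<lambda>m. of_nat (card
     {(f,g). f \<in> {..<dim_row M} \<rightarrow>\<^sub>E X \<and> strict_mono_on {..<dim_row M} f \<and>
             g \<in> {..<dim_col M} \<rightarrow>\<^sub>E Y \<and> strict_mono_on {..<dim_col M} g \<and>
             m = monom_of M f g}))"

definition HPack :: "(nat mat \<Rightarrow> rat) set" where
  "HPack = {c. finite {M. c M \<noteq> 0} \<and> (\<forall>M. c M \<noteq> 0 \<longrightarrow> packed M)}"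

definition Phi_lin :: "'a::linorder set \<Rightarrow> 'b::linorder set \<Rightarrow> (nat mat \<Rightarrow> rat) \<Rightarrow> ('a,'b) series" where
  "Phi_lin X Y c = (\<lambda>m. \<Sum>M\<in>{M. c M \<noteq> 0}. c M * Phi X Y M m)"

end

theory Submission
  imports Defs
begin

lemma monom_eval:
  assumes f: "inj_on f {..<dim_row M}" and g: "inj_on g {..<dim_col M}"
    and r: "r < dim_row M" and s: "s < dim_col M"
  shows "monom_of M f g (f r, g s) = M $$ (r,s)"
proof -
  have "(\<Sum>r'<dim_row M. \<Sum>s'<dim_col M. if f r' = f r \<and> g s' = g s then M $$ (r',s') else 0)
      = (\<Sum>r'<dim_row M. \<Sum>s'<dim_col M. if r' = r \<and> s' = s then M $$ (r',s') else 0)"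
    apply (rule sum.cong, simp, rule sum.cong, simp)
    using f g r s by (auto simp: inj_on_eq_iff)
  also have "\<dots> = (\<Sum>r'<dim_row M. if r' = r then M $$ (r,s) else 0)"
  proof (rule sum.cong)
    fix r' show "(\<Sum>s'<dim_col M. if r' = r \<and> s' = s then M $$ (r',s') else 0) = (if r' = r then M $$ (r,s) else 0)"
      using s by (cases "r' = r") auto
  qed simp
  also have "\<dots> = M $$ (r,s)"
    using r by simp
  finally show ?thesis by (simp add: monom_of_def)
qed

lemma monom_nz:
  assumes "monom_of M f g (a,b) \<noteq> 0"
  shows "\<exists>r<dim_row M. \<exists>s<dim_col M. f r = a \<and> g s = b \<and> M $$ (r,s) \<noteq> 0"
proof (rule ccontr)
  assume "\<not> ?thesis"
  then have "monom_of M f g (a,b) = 0"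
    unfolding monom_of_def by (auto intro!: sum.neutral)
  with assms show False by simp
qed

lemma fst_support:
  assumes p: "packed M" and f: "inj_on f {..<dim_row M}" and g: "inj_on g {..<dim_col M}"
  shows "{a. \<exists>b. monom_of M f g (a,b) \<noteq> 0} = f ` {..<dim_row M}"
proof
  show "{a. \<exists>b. monom_of M f g (a,b) \<noteq> 0} \<subseteq> f ` {..<dim_row M}"
    using monom_nz by fastforce
  show "f ` {..<dim_row M} \<subseteq> {a. \<exists>b. monom_of M f g (a,b) \<noteq> 0}"
  proof
    fix a assume "a \<in> f ` {..<dim_row M}"
    then obtain r where r: "r < dim_row M" "a = f r" by auto
    then obtain s where s: "s < dim_col M" "M $$ (r,s) \<noteq> 0" using p unfolding packed_def by auto
    have "monom_of M f g (f r, g s) \<noteq> 0" using monom_eval[OF f g r(1) s(1)] s by simp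
    then show "a \<in> {a. \<exists>b. monom_of M f g (a,b) \<noteq> 0}"
      using r by blast
  qed
qed

lemma snd_support:
  assumes p: "packed M" and f: "inj_on f {..<dim_row M}" and g: "inj_on g {..<dim_col M}"
  shows "{b. \<exists>a. monom_of M f g (a,b) \<noteq> 0} = g ` {..<dim_col M}"
proof
  show "{b. \<exists>a. monom_of M f g (a,b) \<noteq> 0} \<subseteq> g ` {..<dim_col M}"
    using monom_nz by fastforce
  show "g ` {..<dim_col M} \<subseteq> {b. \<exists>a. monom_of M f g (a,b) \<noteq> 0}"
  proof
    fix b assume "b \<in> g ` {..<dim_col M}"
    then obtain s where s: "s < dim_col M" "b = g s" by auto
    then obtain r where r: "r < dim_row M" "M $$ (r,s) \<noteq> 0" using p unfolding packed_def by auto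
    have "monom_of M f g (f r, g s) \<noteq> 0" using monom_eval[OF f g r(1) s(1)] r by simp
    then show "b \<in> {b. \<exists>a. monom_of M f g (a,b) \<noteq> 0}"
      using s by blast
  qed
qed

lemma sm_sorted:
  fixes f :: "nat \<Rightarrow> 'a::linorder"
  assumes "strict_mono_on {..<k} f"
  shows "sorted_wrt (<) (map f [0..<k])"
  unfolding sorted_wrt_iff_nth_less using assms
  by (auto simp: strict_mono_on_def)

lemma sm_unique:
  fixes f :: "nat \<Rightarrow> 'a::linorder"
  assumes "strict_mono_on {..<k} f" "strict_mono_on {..<k'} f'" "f ` {..<k} = f' ` {..<k'}"
  shows "k = k' \<and> (\<forall>r<k. f r = f' r)"
proof -
  have "map f [0..<k] = map f' [0..<k']"
    apply (rule strict_sorted_equal[OF sm_sorted[OF assms(2)] sm_sorted[OF assms(1)]])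
    using assms(3) by (simp add: lessThan_atLeast0)
  then have "length (map f [0..<k]) = length (map f' [0..<k'])" by simp
  then have kk: "k = k'" by simp
  moreover have "\<forall>r<k. f r = f' r"
  proof (intro allI impI)
    fix r assume "r < k"
    then have "map f [0..<k] ! r = map f' [0..<k'] ! r" using \<open>map f [0..<k] = map f' [0..<k']\<close> by simp
    then show "f r = f' r" using \<open>r < k\<close> kk by simp
  qed
  ultimately show ?thesis by simp
qed

lemma private_monom:
  fixes f f' :: "nat \<Rightarrow> 'a::linorder" and g g' :: "nat \<Rightarrow> 'b::linorder"
  assumes pM: "packed M" and pN: "packed N"
    and f: "strict_mono_on {..<dim_row M} f" and g: "strict_mono_on {..<dim_col M} g"
    and f': "strict_mono_on {..<dim_row N} f'" and g': "strict_mono_on {..<dim_col N} g'"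
    and eq: "monom_of N f' g' = monom_of M f g"
  shows "dim_row N = dim_row M \<and> dim_col N = dim_col M \<and> (\<forall>r<dim_row M. f' r = f r)
     \<and> (\<forall>s<dim_col M. g' s = g s) \<and> N = M"
proof -
  have fi: "inj_on f {..<dim_row M}" "inj_on g {..<dim_col M}"
    "inj_on f' {..<dim_row N}" "inj_on g' {..<dim_col N}"
    by (rule strict_mono_on_imp_inj_on[OF f], rule strict_mono_on_imp_inj_on[OF g],
        rule strict_mono_on_imp_inj_on[OF f'], rule strict_mono_on_imp_inj_on[OF g'])
  have "f' ` {..<dim_row N} = f ` {..<dim_row M}"
    using fst_support[OF pN fi(3,4)] fst_support[OF pM fi(1,2)] eq by simp
  then have A: "dim_row N = dim_row M \<and> (\<forall>r<dim_row N. f' r = f r)" using sm_unique[OF f' f] by blast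
  have "g' ` {..<dim_col N} = g ` {..<dim_col M}"
    using snd_support[OF pN fi(3,4)] snd_support[OF pM fi(1,2)] eq by simp
  then have B: "dim_col N = dim_col M \<and> (\<forall>s<dim_col N. g' s = g s)" using sm_unique[OF g' g] by blast
  have "N = M"
  proof (rule eq_matI)
    fix i j assume ij: "i < dim_row M" "j < dim_col M"
    have ij': "i < dim_row N" "j < dim_col N" using ij A B by auto
    have "N $$ (i,j) = monom_of N f' g' (f' i, g' j)"
      using monom_eval[OF fi(3,4) ij'] by simp
    also have "\<dots> = monom_of M f g (f i, g j)" using eq A B ij' by simp
    also have "\<dots> = M $$ (i,j)" using monom_eval[OF fi(1,2) ij] by simp
    finally show "N $$ (i,j) = M $$ (i,j)" .
  next
    show "dim_row N = dim_row M" using A by simp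
  next
    show "dim_col N = dim_col M" using B by simp
  qed
  then show ?thesis using A B by simp
qed

lemma PiE_sm_eq:
  assumes "f \<in> {..<k} \<rightarrow>\<^sub>E X" "f' \<in> {..<k} \<rightarrow>\<^sub>E X'" "\<forall>r<k. f' r = f r"
  shows "f' = f"
  using assms by (intro extensionalityI[of f' "{..<k}" f]) (auto simp: PiE_iff)

lemma Phi_set_sub:
  fixes X :: "'a::linorder set" and Y :: "'b::linorder set"
  assumes pM: "packed M" and pN: "packed N"
    and f: "f \<in> {..<dim_row M} \<rightarrow>\<^sub>E X" "strict_mono_on {..<dim_row M} f"
    and g: "g \<in> {..<dim_col M} \<rightarrow>\<^sub>E Y" "strict_mono_on {..<dim_col M} g"
  shows "{(f',g'). f' \<in> {..<dim_row N} \<rightarrow>\<^sub>E X \<and> strict_mono_on {..<dim_row N} f' \<and>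
             g' \<in> {..<dim_col N} \<rightarrow>\<^sub>E Y \<and> strict_mono_on {..<dim_col N} g' \<and>
             monom_of M f g = monom_of N f' g'} \<subseteq> (if N = M then {(f,g)} else {})"
proof
  fix p assume "p \<in> {(f',g'). f' \<in> {..<dim_row N} \<rightarrow>\<^sub>E X \<and> strict_mono_on {..<dim_row N} f' \<and>
             g' \<in> {..<dim_col N} \<rightarrow>\<^sub>E Y \<and> strict_mono_on {..<dim_col N} g' \<and>
             monom_of M f g = monom_of N f' g'}"
  then obtain f' g' where p: "p = (f',g')" and f': "f' \<in> {..<dim_row N} \<rightarrow>\<^sub>E X" "strict_mono_on {..<dim_row N} f'"
    and g': "g' \<in> {..<dim_col N} \<rightarrow>\<^sub>E Y" "strict_mono_on {..<dim_col N} g'"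
    and eq: "monom_of M f g = monom_of N f' g'" by blast
  have R: "dim_row N = dim_row M \<and> dim_col N = dim_col M \<and> (\<forall>r<dim_row M. f' r = f r)
     \<and> (\<forall>s<dim_col M. g' s = g s) \<and> N = M"
    using private_monom[OF pM pN f(2) g(2) f'(2) g'(2)] eq by simp
  then have "f' = f" using PiE_sm_eq[OF f(1), of f' X] f'(1) by simp
  moreover have "g' = g" using R PiE_sm_eq[OF g(1), of g' Y] g'(1) by simp
  ultimately show "p \<in> (if N = M then {(f,g)} else {})" using p R by simp
qed

lemma Phi_at:
  fixes X :: "'a::linorder set" and Y :: "'b::linorder set"
  assumes pM: "packed M" and pN: "packed N"
    and f: "f \<in> {..<dim_row M} \<rightarrow>\<^sub>E X" "strict_mono_on {..<dim_row M} f"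
    and g: "g \<in> {..<dim_col M} \<rightarrow>\<^sub>E Y" "strict_mono_on {..<dim_col M} g"
  shows "Phi X Y N (monom_of M f g) = (if N = M then 1 else 0)"
proof -
  let ?S = "{(f',g'). f' \<in> {..<dim_row N} \<rightarrow>\<^sub>E X \<and> strict_mono_on {..<dim_row N} f' \<and>
             g' \<in> {..<dim_col N} \<rightarrow>\<^sub>E Y \<and> strict_mono_on {..<dim_col N} g' \<and>
             monom_of M f g = monom_of N f' g'}"
  have sub: "?S \<subseteq> (if N = M then {(f,g)} else {})" by (rule Phi_set_sub[OF pM pN f g])
  have PS: "Phi X Y N (monom_of M f g) = of_nat (card ?S)" unfolding Phi_def by (rule refl)
  show ?thesis
  proof (cases "N = M")
    case True
    then have "(f,g) \<in> ?S" using f g by simp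
    then have "?S = {(f,g)}" using sub True by auto
    then show ?thesis unfolding PS using True by simp
  next
    case False
    have E: "?S = {}" using sub False by auto
    show ?thesis unfolding PS E using False by simp
  qed
qed

lemma Phi_lin_at:
  fixes X :: "'a::linorder set" and Y :: "'b::linorder set"
  assumes c: "c \<in> HPack" and pM: "packed M"
    and f: "f \<in> {..<dim_row M} \<rightarrow>\<^sub>E X" "strict_mono_on {..<dim_row M} f"
    and g: "g \<in> {..<dim_col M} \<rightarrow>\<^sub>E Y" "strict_mono_on {..<dim_col M} g"
  shows "Phi_lin X Y c (monom_of M f g) = c M"
proof -
  have "Phi_lin X Y c (monom_of M f g) = (\<Sum>N\<in>{N. c N \<noteq> 0}. if N = M then c M else 0)"
    unfolding Phi_lin_def
  proof (rule sum.cong)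
    fix N assume "N \<in> {N. c N \<noteq> 0}"
    then have "packed N" using c unfolding HPack_def by auto
    then show "c N * Phi X Y N (monom_of M f g) = (if N = M then c M else 0)"
      using Phi_at[OF pM _ f g] by simp
  qed simp
  also have "\<dots> = c M" using c unfolding HPack_def by (simp add: sum.delta)
  finally show ?thesis .
qed

lemma exists_sm:
  fixes X :: "'a::linorder set" and k :: nat
  assumes "infinite X"
  shows "\<exists>f. f \<in> {..<k} \<rightarrow>\<^sub>E X \<and> strict_mono_on {..<k} f"
proof -
  obtain B where B: "finite B" "card B = k" "B \<subseteq> X" using infinite_arbitrarily_large[OF assms] by blast
  define xs where "xs = sorted_list_of_set B"
  have len: "length xs = k" using B xs_def by simp
  have set: "set xs = B" using B xs_def by simp
  have sw: "sorted_wrt (<) xs" unfolding xs_def by (rule strict_sorted_list_of_set)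
  define f where "f = (\<lambda>r. if r < k then xs ! r else undefined)"
  have "f \<in> {..<k} \<rightarrow>\<^sub>E X"
    using len set B(3) unfolding f_def by (auto simp: PiE_iff extensional_def)
  moreover have "strict_mono_on {..<k} f"
    using sw len unfolding f_def sorted_wrt_iff_nth_less strict_mono_on_def by auto
  ultimately show ?thesis by blast
qed

lemma no_sm:
  fixes X :: "'a::linorder set"
  assumes "finite X" "f \<in> {..<Suc (card X)} \<rightarrow>\<^sub>E X" "strict_mono_on {..<Suc (card X)} f"
  shows False
proof -
  have "inj_on f {..<Suc (card X)}" by (rule strict_mono_on_imp_inj_on[OF assms(3)])
  moreover have "f ` {..<Suc (card X)} \<subseteq> X" using assms(2) by auto
  ultimately have "card {..<Suc (card X)} \<le> card X" using card_inj_on_le assms(1) by blast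
  then show False by simp
qed

lemma packed_col: "packed (mat (Suc n) 1 (\<lambda>_. 1))"
  unfolding packed_def by (auto intro!: exI[of _ 0])

lemma packed_row: "packed (mat 1 (Suc n) (\<lambda>_. 1))"
  unfolding packed_def by (auto intro!: exI[of _ 0])

lemma Phi_lin_single: "Phi_lin X Y (\<lambda>N. if N = M0 then 1 else 0) = Phi X Y M0"
proof
  fix m
  have "{N. (if N = M0 then 1 else (0::rat)) \<noteq> 0} = {M0}" by auto
  then show "Phi_lin X Y (\<lambda>N. if N = M0 then 1 else 0) m = Phi X Y M0 m"
    unfolding Phi_lin_def by simp
qed

lemma Phi_lin_zero: "Phi_lin X Y (\<lambda>N. 0) = (\<lambda>m. 0)"
  unfolding Phi_lin_def by simp

lemma single_HPack: "packed M0 \<Longrightarrow> (\<lambda>N. if N = M0 then 1 else 0) \<in> HPack"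
  unfolding HPack_def by auto

lemma zero_HPack: "(\<lambda>N. 0) \<in> HPack"
  unfolding HPack_def by auto

theorem mainTheorem12:
  fixes X :: "'a::linorder set" and Y :: "'b::linorder set"
  assumes "countable X" and "countable Y"
  shows "inj_on (Phi_lin X Y) HPack \<longleftrightarrow> infinite X \<and> infinite Y"
proof
  assume inj: "inj_on (Phi_lin X Y) HPack"
  have key: False if p: "packed M0" and z: "Phi X Y M0 = (\<lambda>m. 0)" for M0
  proof -
    have "Phi_lin X Y (\<lambda>N. if N = M0 then 1 else 0) = Phi_lin X Y (\<lambda>N. 0)"
      by (simp only: Phi_lin_single Phi_lin_zero z)
    then have "(\<lambda>N. if N = M0 then 1 else (0::rat)) = (\<lambda>N. 0)"
      by (rule inj_onD[OF inj _ single_HPack[OF p] zero_HPack])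
    from fun_cong[OF this, of M0] show False by simp
  qed
  show "infinite X \<and> infinite Y"
  proof
    show "infinite X"
    proof
      assume fin: "finite X"
      let ?M = "mat (Suc (card X)) 1 (\<lambda>_. 1) :: nat mat"
      have "Phi X Y ?M = (\<lambda>m. 0)"
      proof
        fix m
        have "{(f,g). f \<in> {..<dim_row ?M} \<rightarrow>\<^sub>E X \<and> strict_mono_on {..<dim_row ?M} f \<and>
             g \<in> {..<dim_col ?M} \<rightarrow>\<^sub>E Y \<and> strict_mono_on {..<dim_col ?M} g \<and>
             m = monom_of ?M f g} = {}"
          using no_sm[OF fin] by (simp add: case_prod_unfold) blast
        then show "Phi X Y ?M m = 0" unfolding Phi_def by (simp only: card.empty of_nat_0)
      qed
      then show False using key[OF packed_col] by blast
    qed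
    show "infinite Y"
    proof
      assume fin: "finite Y"
      let ?M = "mat 1 (Suc (card Y)) (\<lambda>_. 1) :: nat mat"
      have "Phi X Y ?M = (\<lambda>m. 0)"
      proof
        fix m
        have "{(f,g). f \<in> {..<dim_row ?M} \<rightarrow>\<^sub>E X \<and> strict_mono_on {..<dim_row ?M} f \<and>
             g \<in> {..<dim_col ?M} \<rightarrow>\<^sub>E Y \<and> strict_mono_on {..<dim_col ?M} g \<and>
             m = monom_of ?M f g} = {}"
          using no_sm[OF fin] by (simp add: case_prod_unfold) blast
        then show "Phi X Y ?M m = 0" unfolding Phi_def by (simp only: card.empty of_nat_0)
      qed
      then show False using key[OF packed_row] by blast
    qed
  qed
next
  assume inf: "infinite X \<and> infinite Y"
  show "inj_on (Phi_lin X Y) HPack"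
  proof (rule inj_onI)
    fix c1 c2 assume c1: "c1 \<in> HPack" and c2: "c2 \<in> HPack" and eq: "Phi_lin X Y c1 = Phi_lin X Y c2"
    show "c1 = c2"
    proof
      fix M show "c1 M = c2 M"
      proof (cases "packed M")
        case True
        obtain f where f: "f \<in> {..<dim_row M} \<rightarrow>\<^sub>E X" "strict_mono_on {..<dim_row M} f"
          using exists_sm[of X "dim_row M"] inf by blast
        obtain g where g: "g \<in> {..<dim_col M} \<rightarrow>\<^sub>E Y" "strict_mono_on {..<dim_col M} g"
          using exists_sm[of Y "dim_col M"] inf by blast
        show ?thesis using Phi_lin_at[OF c1 True f g] Phi_lin_at[OF c2 True f g] eq by simp
      next
        case False
        have "c1 M = 0" using False c1 unfolding HPack_def by blast
        moreover have "c2 M = 0" using False c2 unfolding HPack_def by blast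
        ultimately show ?thesis by simp
      qed
    qed
  qed
qed

end
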